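(* Let $C:=\sqrt{\frac{15+\sqrt{65}}{8}}$ and let $g:\mathbb{R}\to\mathbb{R}$ be $$g(z):=-\frac{2}{5}z^4+\frac{8}{5}Cz^3+\Big(\frac32-\frac{12}{5}C^2\Big)z^2+\Big(\frac85C^3-3C\Big)z+1 .$$ For $W=[w_1,w_2,w_3]$ with $w_1,w_2,w_3\in\mathbb{R}^3$ and $b=[b_1,b_2,b_3]\in\mathbb{R}^3$, define $f(\cdot;W):\mathbb{R}^3\to\mathbb{R}^3$ by $f(x;W):=[g(\langle w_1,x\rangle+b_1),g(\langle w_2,x\rangle+b_2),g(\langle w_3,x\rangle+b_3)]^\top$. Then there exist such $W$ and $b$ for which $f(\cdot;W)$ has two distinct fixed points $p_1,p_2\in\mathbb{R}^3$ such that for each $i\in\{1,2\}$ there exist constants $\epsilon_i>0$, $c_i>0$ and $K_i\in[0,1)$ with the following property: for every initial point $x^{(0)}\in\prod_{j=1}^3[p_{i,j}-\epsilon_i,p_{i,j}+\epsilon_i]$, the fixed-point iteration $x^{(t)}=f(x^{(t-1)};W)$ ($t\ge1$) converges to $p_i$, and for every $t\ge2$, $$\|x^{(t)}-p_i\|_\infty\le K_i^t\cdot c_i\epsilon_i .$$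
   Context: $p_{i,j}$ denotes the $j$-th coordinate of $p_i$; $\|\cdot\|_\infty$ is the $\ell_\infty$ norm. A fixed point of $F$ is a point $p$ with $F(p)=p$. *)

theory Defs
  imports "HOL-Analysis.Analysis"
begin

definition C_const :: real where
  "C_const = sqrt ((15 + sqrt 65) / 8)"

definition g_poly :: "real \<Rightarrow> real" where
  "g_poly z = - (2/5) * z ^ 4 + (8/5) * C_const * z ^ 3
              + (3/2 - (12/5) * C_const ^ 2) * z ^ 2
              + ((8/5) * C_const ^ 3 - 3 * C_const) * z + 1"

definition f_map :: "real^3^3 \<Rightarrow> real^3 \<Rightarrow> real^3 \<Rightarrow> real^3" where
  "f_map W b x = (\<chi> i. g_poly ((W $ i) \<bullet> x + b $ i))"

end

theory Submission
  imports Defs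
begin

lemma g_shift: "g_poly (C_const + u) = -(2/5) * u^4 + (3/2) * u^2 + g_poly C_const"
  unfolding g_poly_def by (simp add: field_simps power2_eq_square power3_eq_cube power4_eq_xxxx)
lemma dotW: "(\<chi> j. if j = (1::3) then a else 0) \<bullet> (x::real^3) = a * x$1"
proof -
  have "(\<chi> j. if j = (1::3) then a else 0) \<bullet> (x::real^3) = (\<Sum>i\<in>UNIV. if i = 1 then a * x$i else 0)"
    unfolding inner_vec_def by (rule sum.cong) auto
  also have "\<dots> = a * x$1" by (simp add: sum.delta)
  finally show ?thesis .
qed
lemma infn: "(\<And>i. \<bar>(x::real^'n)$i\<bar> \<le> r) \<Longrightarrow> infnorm x \<le> r"
  unfolding infnorm_cart by (rule cSup_least) auto
lemma pw: assumes "0 \<le> (w::real)" "w \<le> 1/16"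
  shows "w^2 \<le> w/16" "w^3 \<le> w/256" "w^4 \<le> w/256"
proof -
  have "w^2 = w * w" by (simp add: power2_eq_square)
  also have "\<dots> \<le> w * (1/16)" using assms by (intro mult_left_mono) auto
  finally show a: "w^2 \<le> w/16" by simp
  have "w^2 \<le> (1/16)^2" using assms by (intro power_mono) auto
  hence s2: "w^2 \<le> 1/256" by (simp add: power2_eq_square)
  have "w^3 = w * w^2" by (simp add: power2_eq_square power3_eq_cube)
  also have "\<dots> \<le> w * (1/256)" using s2 assms by (intro mult_left_mono) auto
  finally show b: "w^3 \<le> w/256" by simp
  have "w^4 = w * w^3" by (simp add: power3_eq_cube power4_eq_xxxx)
  also have "\<dots> \<le> 1 * w^3" using assms by (intro mult_right_mono) auto
  finally show "w^4 \<le> w/256" using b by simp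
qed

lemma b1: assumes "\<bar>v\<bar> \<le> \<bar>d\<bar>" "\<bar>d\<bar> \<le> 1/16"
  shows "\<bar>-(2/5) * (v::real)^4 + (3/2) * v^2\<bar> \<le> \<bar>d\<bar>/2"
proof -
  define w where "w = \<bar>v\<bar>"
  have w0: "0 \<le> w" "w \<le> 1/16" "w \<le> \<bar>d\<bar>" using assms by (auto simp: w_def)
  have e2: "v^2 = w^2" "v^4 = w^4" by (simp_all add: w_def power_even_abs)
  have h: "\<bar>-(2/5) * v^4 + (3/2) * v^2\<bar> \<le> (2/5) * w^4 + (3/2) * w^2" unfolding e2
    by (simp add: abs_le_iff w0)
  have a: "w^2 \<le> w/16" using pw w0 by blast
  have c: "w^4 \<le> w/256" using pw w0 by blast
  have "(2/5) * w^4 + (3/2) * w^2 \<le> w/2" using a c w0 by linarith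
  thus ?thesis using h w0 by linarith
qed

lemma b2: assumes "s^2 = 15/8" "0 < s" "s < 2" "\<bar>v\<bar> \<le> 1/16"
  shows "\<bar>-(2/5) * (s+v)^4 + (3/2) * (s+v)^2 - 45/32\<bar> \<le> \<bar>v::real\<bar>/2"
proof -
  have s4: "s^4 = 225/64" proof -
    have "s^4 = (s^2)^2" by simp
    also have "\<dots> = (15/8)^2" by (simp only: assms(1))
    also have "\<dots> = 225/64" by (simp add: power2_eq_square)
    finally show ?thesis .
  qed
  have eq: "-(2/5) * (s+v)^4 + (3/2) * (s+v)^2 - 45/32 = - (3 * v^2) - (8/5) * s * v^3 - (2/5) * v^4"
  proof -
    have "-(2/5) * (s+v)^4 + (3/2) * (s+v)^2 - 45/32 = -(2/5) * s^4 + (3/2) * s^2 - 45/32 + v * (3 * s - (8/5) * s * s^2) + v^2 * (3/2 - (12/5) * s^2) - (8/5) * s * v^3 - (2/5) * v^4"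
      by (simp add: algebra_simps power2_eq_square power3_eq_cube power4_eq_xxxx)
    also have "\<dots> = - (3 * v^2) - (8/5) * s * v^3 - (2/5) * v^4" unfolding assms(1) s4 by (simp add: algebra_simps)
    finally show ?thesis .
  qed
  define w where "w = \<bar>v\<bar>"
  have w0: "0 \<le> w" "w \<le> 1/16" using assms by (auto simp: w_def)
  have e2: "\<bar>v^2\<bar> = w^2" "\<bar>v^3\<bar> = w^3" "\<bar>v^4\<bar> = w^4" by (simp_all add: w_def power_abs)
  have "\<bar>- (3 * v^2) - (8/5) * s * v^3 - (2/5) * v^4\<bar> \<le> 3 * w^2 + (8/5) * s * w^3 + (2/5) * w^4"
  proof -
    have "\<bar>(8/5) * s * v^3\<bar> = (8/5) * s * w^3" using e2 assms(2) by (simp add: abs_mult)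
    moreover have "\<bar>(2/5) * v^4\<bar> = (2/5) * w^4" using e2 by (simp add: abs_mult)
    moreover have "\<bar>3 * v^2\<bar> = 3 * w^2" using e2 by (simp add: abs_mult)
    ultimately show ?thesis by linarith
  qed
  also have "\<dots> \<le> 3 * w^2 + (16/5) * w^3 + (2/5) * w^4"
    using assms(3) w0 by (simp add: mult_right_mono)
  also have "\<dots> \<le> w/2"
  proof -
    note a = pw(1)[OF w0] and b = pw(2)[OF w0] and c = pw(3)[OF w0]
    show ?thesis using a b c w0 by linarith
  qed
  finally show ?thesis using eq w_def by simp
qed

lemma contr:
  fixes F :: "real^3 \<Rightarrow> real^3" and p :: "real^3"
  assumes e0: "e > 0"
    and step: "\<And>x r. r \<le> e \<Longrightarrow> (\<forall>j. \<bar>x$j - p$j\<bar> \<le> r) \<Longrightarrow> (\<forall>j. \<bar>F x $ j - p$j\<bar> \<le> r/2)"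
  shows "\<exists>\<epsilon> c K. \<epsilon> > 0 \<and> c > 0 \<and> 0 \<le> K \<and> K < 1 \<and>
        (\<forall>x0 :: real^3. (\<forall>j. \<bar>x0 $ j - p $ j\<bar> \<le> \<epsilon>) \<longrightarrow>
           (let x = (\<lambda>t. (F ^^ t) x0) in
              x \<longlonglongrightarrow> p \<and>
              (\<forall>t \<ge> 2. infnorm (x t - p) \<le> K ^ t * c * \<epsilon>)))"
proof (intro exI conjI allI impI)
  show "e > 0" "(1::real) > 0" "0 \<le> (1/2::real)" "(1/2::real) < 1" using e0 by auto
  fix x0 :: "real^3"
  assume h0: "\<forall>j. \<bar>x0 $ j - p $ j\<bar> \<le> e"
  have it: "\<forall>j. \<bar>(F^^t) x0 $ j - p$j\<bar> \<le> (1/2)^t * e" for t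
  proof (induction t)
    case 0 then show ?case using h0 by simp
  next
    case (Suc t)
    have "(1/2::real)^t \<le> 1" by (simp add: power_le_one)
    hence le: "(1/2)^t * e \<le> e" using e0 by (simp add: mult_le_cancel_right1)
    have "\<forall>j. \<bar>F ((F^^t) x0) $ j - p$j\<bar> \<le> ((1/2)^t * e)/2"
      by (rule step[OF le Suc.IH])
    then show ?case by simp
  qed
  have inf: "infnorm ((F^^t) x0 - p) \<le> (1/2)^t * e" for t
    by (rule infn) (use it in simp)
  show "let x = (\<lambda>t. (F ^^ t) x0) in x \<longlonglongrightarrow> p \<and> (\<forall>t \<ge> 2. infnorm (x t - p) \<le> (1/2) ^ t * 1 * e)"
    unfolding Let_def
  proof (intro conjI allI impI)
    show "\<And>t. 2 \<le> t \<Longrightarrow> infnorm ((F ^^ t) x0 - p) \<le> (1/2) ^ t * 1 * e" using inf by simp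
    have "(\<lambda>t. (F ^^ t) x0 - p) \<longlonglongrightarrow> 0"
    proof (rule Lim_null_comparison)
      show "\<forall>\<^sub>F t in sequentially. norm ((F ^^ t) x0 - p) \<le> sqrt 3 * ((1/2)^t * e)"
      proof (rule always_eventually, rule allI)
        fix t
        have "norm ((F ^^ t) x0 - p) \<le> sqrt (real DIM(real^3)) * infnorm ((F ^^ t) x0 - p)"
          by (rule norm_le_infnorm)
        also have "\<dots> \<le> sqrt 3 * ((1/2)^t * e)" using inf[of t] by (simp add: mult_left_mono)
        finally show "norm ((F ^^ t) x0 - p) \<le> sqrt 3 * ((1/2)^t * e)" .
      qed
      show "(\<lambda>t. sqrt 3 * ((1/2::real)^t * e)) \<longlonglongrightarrow> 0"
        by (intro tendsto_mult_right_zero tendsto_mult_left_zero LIMSEQ_power_zero) simp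
    qed
    thus "(\<lambda>t. (F ^^ t) x0) \<longlonglongrightarrow> p" using Lim_null by blast
  qed
qed

theorem lemmaB5:
  shows "\<exists>(W :: real^3^3) (b :: real^3) (p1 :: real^3) (p2 :: real^3).
     f_map W b p1 = p1 \<and> f_map W b p2 = p2 \<and> p1 \<noteq> p2 \<and>
     (\<forall>p \<in> {p1, p2}. \<exists>\<epsilon> c K. \<epsilon> > 0 \<and> c > 0 \<and> 0 \<le> K \<and> K < 1 \<and>
        (\<forall>x0 :: real^3. (\<forall>j. \<bar>x0 $ j - p $ j\<bar> \<le> \<epsilon>) \<longrightarrow>
           (let x = (\<lambda>t. (f_map W b ^^ t) x0) in
              x \<longlonglongrightarrow> p \<and>
              (\<forall>t \<ge> 2. infnorm (x t - p) \<le> K ^ t * c * \<epsilon>))))"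
proof -
  define C where "C = C_const"
  define K0 where "K0 = g_poly C"
  define s where "s = sqrt (15/8::real)"
  define a where "a = s * 32 / 45"
  define W :: "real^3^3" where "W = (\<chi> i. if i = 1 then (\<chi> j. if j = 1 then a else 0) else 0)"
  define b :: "real^3" where "b = (\<chi> i. if i = 1 then C - a * K0 else C)"
  define p1 :: "real^3" where "p1 = (\<chi> i. K0)"
  define p2 :: "real^3" where "p2 = (\<chi> i. if i = 1 then K0 + 45/32 else K0)"
  have s2: "s^2 = 15/8" by (simp add: s_def)
  have s0: "0 < s" by (simp add: s_def)
  have "s \<le> sqrt ((45/32)^2)" unfolding s_def by (rule real_sqrt_le_mono) (simp add: power2_eq_square)
  hence sle: "s \<le> 45/32" by simp
  hence s_2: "s < 2" by simp
  have a0: "0 < a" "a \<le> 1" using s0 sle by (auto simp: a_def)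
  have gs: "g_poly (C + u) = -(2/5) * u^4 + (3/2) * u^2 + K0" for u
    unfolding C_def K0_def by (rule g_shift)
  have fx: "f_map W b x $ i = (if i = 1 then g_poly (C + a * (x$1 - K0)) else K0)" for x i
  proof (cases "i = 1")
    case True
    have "W $ i \<bullet> x + b $ i = C + a * (x$1 - K0)" using True
      by (simp add: W_def b_def dotW algebra_simps)
    then show ?thesis using True by (simp add: f_map_def)
  next
    case False
    then show ?thesis by (simp add: f_map_def W_def b_def K0_def)
  qed
  have gsK: "-(2/5) * s^4 + (3/2) * s^2 = 45/32"
    using b2[OF s2 s0 s_2, of 0] by simp
  have fp1: "f_map W b p1 = p1"
    by (simp add: vec_eq_iff fx p1_def K0_def)
  have fp2: "f_map W b p2 = p2"
  proof -
    have "g_poly (C + a * (45/32)) = K0 + 45/32"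
      using gs[of s] gsK by (simp add: a_def)
    thus ?thesis by (simp add: vec_eq_iff fx p2_def)
  qed
  have ne: "p1 \<noteq> p2" by (simp add: vec_eq_iff p1_def p2_def exI[of _ 1])
  have "(1/16::real) > 0" by simp
  note c1 = contr[where e="1/16" and F="f_map W b" and p=p1, OF this] and c2 = contr[where e="1/16" and F="f_map W b" and p=p2, OF this]
  have P1: "\<forall>j. \<bar>f_map W b x $ j - p1$j\<bar> \<le> r/2"
    if r: "r \<le> 1/16" and hx: "\<forall>j. \<bar>x$j - p1$j\<bar> \<le> r" for x r
  proof
    fix j
    have d: "\<bar>x$1 - K0\<bar> \<le> r" using hx by (auto simp: p1_def)
    hence r0: "0 \<le> r" by simp
    have v: "\<bar>a * (x$1 - K0)\<bar> \<le> \<bar>x$1 - K0\<bar>" using a0 by (simp add: abs_mult mult_left_le_one_le)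
    have "\<bar>-(2/5) * (a * (x$1 - K0))^4 + (3/2) * (a * (x$1 - K0))^2\<bar> \<le> \<bar>x$1 - K0\<bar>/2"
      by (rule b1[OF v]) (use d r in simp)
    thus "\<bar>f_map W b x $ j - p1$j\<bar> \<le> r/2" using d r0
      by (cases "j = 1") (auto simp: fx gs p1_def)
  qed
  have P2: "\<forall>j. \<bar>f_map W b x $ j - p2$j\<bar> \<le> r/2"
    if r: "r \<le> 1/16" and hx: "\<forall>j. \<bar>x$j - p2$j\<bar> \<le> r" for x r
  proof
    fix j
    define d where "d = x$1 - (K0 + 45/32)"
    have d: "\<bar>d\<bar> \<le> r" using hx[rule_format, of 1] by (simp add: p2_def d_def)
    hence r0: "0 \<le> r" by simp
    have v: "\<bar>a * d\<bar> \<le> \<bar>d\<bar>" using a0 by (simp add: abs_mult mult_left_le_one_le)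
    have ea: "a * (x$1 - K0) = s + a * d" by (simp add: d_def a_def field_simps)
    have hb: "\<bar>-(2/5) * (s + a * d)^4 + (3/2) * (s + a * d)^2 - 45/32\<bar> \<le> \<bar>a * d\<bar>/2"
      by (rule b2[OF s2 s0 s_2]) (use d r v in simp)
    have eqg: "g_poly (C + a * (x$1 - K0)) - (K0 + 45/32) = -(2/5) * (s + a * d)^4 + (3/2) * (s + a * d)^2 - 45/32"
      unfolding ea gs by simp
    have "\<bar>g_poly (C + a * (x$1 - K0)) - (K0 + 45/32)\<bar> \<le> r/2"
      unfolding eqg using hb v d by linarith
    thus "\<bar>f_map W b x $ j - p2$j\<bar> \<le> r/2" using r0
      by (cases "j = 1") (auto simp: fx p2_def)
  qed
  show ?thesis
    apply (rule exI[of _ W], rule exI[of _ b], rule exI[of _ p1], rule exI[of _ p2])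
    using fp1 fp2 ne c1[OF P1] c2[OF P2] by auto
qed
end
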